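(* Let $T$ be a locally finite simplicial tree and let $G=\langle g_1,\dots,g_r\rangle$ be a discrete non-elementary subgroup of $\mathrm{Isom}(T)$. If $h\in G$ has infinite order, then $\langle g_i,h\rangle$ is non-elementary for some $i\in\{1,\dots,r\}$.
   Context: $\mathrm{Isom}(T)$ carries the topology of pointwise convergence. A subgroup is elementary if it stabilises a vertex, an end, or a pair of ends of $T$, and non-elementary otherwise. *)

theory Defs
  imports "HOL-Analysis.Analysis"
begin

text \<open>A simplicial tree is given by its vertex set (the whole type 'v) and a
symmetric irreflexive adjacency relation adj.\<close>

definition is_cycle :: "('v \<Rightarrow> 'v \<Rightarrow> bool) \<Rightarrow> 'v list \<Rightarrow> bool" where
  "is_cycle adj xs \<longleftrightarrow> length xs \<ge> 3 \<and> distinct xs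
     \<and> (\<forall>i. Suc i < length xs \<longrightarrow> adj (xs ! i) (xs ! Suc i))
     \<and> adj (last xs) (hd xs)"

definition simplicial_tree :: "('v \<Rightarrow> 'v \<Rightarrow> bool) \<Rightarrow> bool" where
  "simplicial_tree adj \<longleftrightarrow>
     (\<forall>x y. adj x y \<longrightarrow> adj y x) \<and> (\<forall>x. \<not> adj x x)
     \<and> (\<forall>x y. adj\<^sup>*\<^sup>* x y) \<and> (\<forall>xs. \<not> is_cycle adj xs)"

definition locally_finite :: "('v \<Rightarrow> 'v \<Rightarrow> bool) \<Rightarrow> bool" where
  "locally_finite adj \<longleftrightarrow> (\<forall>x. finite {y. adj x y})"

text \<open>Isometries of T = graph automorphisms of T (inversions allowed).\<close>
definition isom :: "('v \<Rightarrow> 'v \<Rightarrow> bool) \<Rightarrow> ('v \<Rightarrow> 'v) \<Rightarrow> bool" where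
  "isom adj f \<longleftrightarrow> bij f \<and> (\<forall>x y. adj x y \<longleftrightarrow> adj (f x) (f y))"

definition gen_group :: "('v \<Rightarrow> 'v) set \<Rightarrow> ('v \<Rightarrow> 'v) set" where
  "gen_group S = \<Inter>{H. S \<subseteq> H \<and> id \<in> H \<and> (\<forall>f\<in>H. \<forall>g\<in>H. f \<circ> g \<in> H)
                        \<and> (\<forall>f\<in>H. inv f \<in> H)}"

definition discrete_subgroup :: "('v \<Rightarrow> 'v) set \<Rightarrow> bool" where
  "discrete_subgroup G \<longleftrightarrow>
     subtopology (product_topology (\<lambda>_. discrete_topology UNIV) UNIV) G = discrete_topology G"

text \<open>Rays (geodesic rays = non-backtracking infinite edge paths) and ends.\<close>
definition ray :: "('v \<Rightarrow> 'v \<Rightarrow> bool) \<Rightarrow> (nat \<Rightarrow> 'v) \<Rightarrow> bool" where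
  "ray adj r \<longleftrightarrow> (\<forall>n. adj (r n) (r (Suc n)) \<and> r n \<noteq> r (Suc (Suc n)))"

definition same_end :: "(nat \<Rightarrow> 'v) \<Rightarrow> (nat \<Rightarrow> 'v) \<Rightarrow> bool" where
  "same_end r s \<longleftrightarrow> (\<exists>k m. \<forall>n. r (n + k) = s (n + m))"

definition elementary :: "('v \<Rightarrow> 'v \<Rightarrow> bool) \<Rightarrow> ('v \<Rightarrow> 'v) set \<Rightarrow> bool" where
  "elementary adj H \<longleftrightarrow>
     (\<exists>v. \<forall>g\<in>H. g v = v)
   \<or> (\<exists>r. ray adj r \<and> (\<forall>g\<in>H. same_end (g \<circ> r) r))
   \<or> (\<exists>r s. ray adj r \<and> ray adj s \<and> \<not> same_end r s \<and>
        (\<forall>g\<in>H. (same_end (g \<circ> r) r \<and> same_end (g \<circ> s) s)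
               \<or> (same_end (g \<circ> r) s \<and> same_end (g \<circ> s) r)))"

end

theory Submission imports Defs begin

fun walk :: "('v \<Rightarrow> 'v \<Rightarrow> bool) \<Rightarrow> 'v list \<Rightarrow> bool" where
  "walk adj [] = False"
| "walk adj [x] = True"
| "walk adj (x#y#ys) = (adj x y \<and> walk adj (y#ys))"

fun nb :: "'v list \<Rightarrow> bool" where
  "nb (x#y#z#zs) = (x \<noteq> z \<and> nb (y#z#zs))"
| "nb _ = True"

lemma walk_nth: "walk adj xs \<longleftrightarrow> xs \<noteq> [] \<and> (\<forall>i. Suc i < length xs \<longrightarrow> adj (xs!i) (xs!Suc i))"
proof (induction adj xs rule: walk.induct)
  case (3 adj x y ys)
  show ?case
    apply (simp add: 3)
    by (auto simp: nth_Cons split: nat.splits)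
qed auto

lemma nb_nth: "nb xs \<longleftrightarrow> (\<forall>i. Suc (Suc i) < length xs \<longrightarrow> xs!i \<noteq> xs!Suc (Suc i))"
proof (induction xs rule: nb.induct)
  case (1 x y z zs)
  show ?case
    apply (simp add: 1)
    by (auto simp: nth_Cons split: nat.splits)
qed auto

locale tree =
  fixes adj :: "'v \<Rightarrow> 'v \<Rightarrow> bool"
  assumes symm: "adj x y \<Longrightarrow> adj y x"
    and irr: "\<not> adj x x"
    and conn: "adj\<^sup>*\<^sup>* x y"
    and acyc: "\<not> is_cycle adj xs"
begin

lemma T1: "walk adj xs \<Longrightarrow> nb xs \<Longrightarrow> distinct xs"
proof (induction xs)
  case Nil then show ?case by simp
next
  case (Cons x ys)
  show ?case
  proof (cases ys)
    case Nil then show ?thesis by simp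
  next
    case (Cons y zs)
    have wy: "walk adj ys" and ny: "nb ys" using Cons Cons.prems
      by (auto elim: nb.elims)
    with Cons.IH have dy: "distinct ys" by simp
    have W: "\<And>i. Suc i < length (x#ys) \<Longrightarrow> adj ((x#ys)!i) ((x#ys)!Suc i)"
      using Cons.prems(1) walk_nth by blast
    have N: "\<And>i. Suc (Suc i) < length (x#ys) \<Longrightarrow> (x#ys)!i \<noteq> (x#ys)!Suc (Suc i)"
      using Cons.prems(2) nb_nth by blast
    have "x \<notin> set ys"
    proof
      assume "x \<in> set ys"
      define j where "j = (LEAST j. j < length ys \<and> ys!j = x)"
      have ex: "\<exists>j. j < length ys \<and> ys!j = x" using \<open>x \<in> set ys\<close> by (simp add: in_set_conv_nth)
      have jl: "j < length ys" and jx: "ys!j = x" using LeastI_ex[OF ex] unfolding j_def by auto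
      have jmin: "\<And>i. i < j \<Longrightarrow> ys!i \<noteq> x"
        using not_less_Least j_def jl by fastforce
      have j0: "j \<noteq> 0" using W[of 0] jx irr Cons by (cases j) auto
      have j1: "j \<noteq> 1" using N[of 0] jx Cons jl by auto
      define c where "c = x # take j ys"
      have "is_cycle adj c"
        unfolding is_cycle_def
      proof (intro conjI allI impI)
        show "3 \<le> length c" using j0 j1 jl by (simp add: c_def)
        show "distinct c" using dy jmin jl by (auto simp: c_def in_set_conv_nth)
        fix i assume "Suc i < length c"
        then have "Suc i < length (x#ys)" "i < j" using jl by (auto simp: c_def)
        then show "adj (c!i) (c!Suc i)" using W[of i] by (auto simp: c_def nth_Cons split: nat.splits)
      next
        have "last c = ys!(j-1)" using j0 jl by (cases ys) (simp_all add: c_def last_conv_nth)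
        moreover have "adj (ys!(j-1)) (ys!j)" using W[of j] j0 jl by simp
        ultimately show "adj (last c) (hd c)" using jx by (simp add: c_def)
      qed
      with acyc show False by blast
    qed
    then show ?thesis using dy by simp
  qed
qed

lemma walk_tl: "walk adj (x#xs) \<Longrightarrow> xs \<noteq> [] \<Longrightarrow> walk adj xs"
  by (cases xs) auto

lemma nb_tl: "nb (x#xs) \<Longrightarrow> nb xs"
  by (cases xs rule: nb.cases) auto

lemma distinct_hd_last: "distinct ys \<Longrightarrow> ys \<noteq> [] \<Longrightarrow> hd ys = last ys \<Longrightarrow> length ys = 1"
proof (rule ccontr)
  assume a: "distinct ys" "ys \<noteq> []" "hd ys = last ys" "length ys \<noteq> 1"
  then have "length ys \<ge> 2" by (cases ys) auto
  then have "ys!0 = ys!(length ys - 1)" using a by (simp add: hd_conv_nth last_conv_nth)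
  moreover have "0 \<noteq> length ys - 1" using \<open>length ys \<ge> 2\<close> by simp
  ultimately show False using a(1) \<open>length ys \<ge> 2\<close> nth_eq_iff_index_eq by fastforce
qed

lemma join:
  "walk adj (xs @ [x]) \<Longrightarrow> nb (xs @ [x]) \<Longrightarrow> walk adj (x # ys) \<Longrightarrow> nb (x # ys)
   \<Longrightarrow> (xs \<noteq> [] \<and> ys \<noteq> [] \<longrightarrow> last xs \<noteq> hd ys)
   \<Longrightarrow> walk adj (xs @ x # ys) \<and> nb (xs @ x # ys)"
proof (induction xs)
  case Nil then show ?case by simp
next
  case (Cons z zs)
  note P = Cons.prems
  have IH: "walk adj (zs @ x # ys) \<and> nb (zs @ x # ys)"
  proof (rule Cons.IH)
    show "walk adj (zs @ [x])" using P(1) walk_tl[of z "zs@[x]"] by simp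
    show "nb (zs @ [x])" using P(2) nb_tl by fastforce
    show "walk adj (x # ys)" "nb (x # ys)" by (fact P(3)) (fact P(4))
    show "zs \<noteq> [] \<and> ys \<noteq> [] \<longrightarrow> last zs \<noteq> hd ys" using P(5) by auto
  qed
  show ?case
  proof (cases zs)
    case Nil
    then show ?thesis using P IH by (cases ys) auto
  next
    case (Cons w ws)
    note zs = this
    show ?thesis
    proof (cases ws)
      case Nil
      then show ?thesis using P(1,2) IH zs by simp
    next
      case (Cons w' ws')
      then show ?thesis using P(1,2) IH zs by simp
    qed
  qed
qed

lemma walk_rev: "walk adj (rev xs) \<longleftrightarrow> walk adj xs"
proof -
  have "walk adj (rev xs)" if w: "walk adj xs" for xs
  proof -
    have W: "\<And>i. Suc i < length xs \<Longrightarrow> adj (xs!i) (xs!Suc i)" and ne: "xs \<noteq> []"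
      using w walk_nth by blast+
    show ?thesis unfolding walk_nth
    proof (intro conjI allI impI)
      show "rev xs \<noteq> []" using ne by simp
      fix i assume i: "Suc i < length (rev xs)"
      let ?n = "length xs"
      have "adj (xs!(?n - Suc (Suc i))) (xs!Suc (?n - Suc (Suc i)))" using W[of "?n - Suc (Suc i)"] i by simp
      moreover have "Suc (?n - Suc (Suc i)) = ?n - Suc i" using i by simp
      ultimately show "adj (rev xs!i) (rev xs!Suc i)" using i by (simp add: rev_nth symm)
    qed
  qed
  from this[of xs] this[of "rev xs"] show ?thesis by auto
qed

lemma nb_rev: "nb (rev xs) \<longleftrightarrow> nb xs"
proof -
  have "nb (rev xs)" if w: "nb xs" for xs :: "'a list"
  proof -
    have W: "\<And>i. Suc (Suc i) < length xs \<Longrightarrow> xs!i \<noteq> xs!Suc (Suc i)"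
      using w nb_nth by blast
    show ?thesis unfolding nb_nth
    proof (intro conjI allI impI)
      fix i assume i: "Suc (Suc i) < length (rev xs)"
      let ?n = "length xs"
      have "xs!(?n - Suc (Suc (Suc i))) \<noteq> xs!Suc (Suc (?n - Suc (Suc (Suc i))))" using W[of "?n - Suc (Suc (Suc i))"] i by simp
      moreover have "Suc (Suc (?n - Suc (Suc (Suc i)))) = ?n - Suc i" using i by simp
      ultimately show "rev xs!i \<noteq> rev xs!Suc (Suc i)" using i by (simp add: rev_nth)
    qed
  qed
  from this[of xs] this[of "rev xs"] show ?thesis by auto
qed

lemma T2: "walk adj xs \<Longrightarrow> nb xs \<Longrightarrow> walk adj ys \<Longrightarrow> nb ys \<Longrightarrow> hd xs = hd ys
   \<Longrightarrow> last xs = last ys \<Longrightarrow> xs = ys"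
proof (induction xs arbitrary: ys)
  case Nil then show ?case by simp
next
  case (Cons a xs')
  obtain ys' where ys: "ys = a # ys'" using Cons.prems by (cases ys) auto
  show ?case
  proof (cases "xs' = []")
    case True
    have d: "distinct ys" by (rule T1[OF Cons.prems(3,4)])
    have "hd ys = last ys" using Cons.prems(5,6) True by simp
    then have "length ys = 1" using distinct_hd_last[OF d] ys by blast
    then show ?thesis using True ys by simp
  next
    case xn: False
    show ?thesis
    proof (cases "ys' = []")
      case True
      have d: "distinct (a#xs')" by (rule T1[OF Cons.prems(1,2)])
      have "hd (a#xs') = last (a#xs')" using Cons.prems(5,6) True ys by simp
      then have "length (a#xs') = 1" using distinct_hd_last[OF d] by blast
      then show ?thesis using xn by simp
    next
      case yn: False
      obtain b xs'' where xb: "xs' = b # xs''" using xn by (cases xs') auto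
      obtain c ys'' where yc: "ys' = c # ys''" using yn by (cases ys') auto
      show ?thesis
      proof (cases "b = c")
        case True
        have "xs' = ys'"
        proof (rule Cons.IH)
          show "walk adj xs'" using Cons.prems(1) xn walk_tl[of a xs'] by simp
          show "nb xs'" using Cons.prems(2) nb_tl[of a xs'] by simp
          show "walk adj ys'" using Cons.prems(3) yn walk_tl[of a ys'] ys by simp
          show "nb ys'" using Cons.prems(4) nb_tl[of a ys'] ys by simp
          show "hd xs' = hd ys'" using True xb yc by simp
          show "last xs' = last ys'" using Cons.prems(6) ys xn yn by simp
        qed
        then show ?thesis using ys by simp
      next
        case False
        have J: "walk adj (rev xs' @ a # ys') \<and> nb (rev xs' @ a # ys')"
        proof (rule join)
          show "walk adj (rev xs' @ [a])" using Cons.prems(1) walk_rev[of "a#xs'"] by simp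
          show "nb (rev xs' @ [a])" using Cons.prems(2) nb_rev[of "a#xs'"] by simp
          show "walk adj (a # ys')" using Cons.prems(3) ys by simp
          show "nb (a # ys')" using Cons.prems(4) ys by simp
          show "rev xs' \<noteq> [] \<and> ys' \<noteq> [] \<longrightarrow> last (rev xs') \<noteq> hd ys'" using False xb yc by simp
        qed
        have "distinct (rev xs' @ a # ys')" using T1 J by blast
        moreover have "hd (rev xs' @ a # ys') = last (rev xs' @ a # ys')"
          using Cons.prems(6) ys xn yn by (simp add: hd_rev)
        ultimately have "length (rev xs' @ a # ys') = 1" using distinct_hd_last by blast
        then show ?thesis using xn by simp
      qed
    qed
  qed
qed

lemma join2:
  assumes "walk adj xs" "nb xs" "walk adj ys" "nb ys" "last xs = hd ys"
    and "length xs \<ge> 2 \<and> length ys \<ge> 2 \<longrightarrow> last (butlast xs) \<noteq> hd (tl ys)"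
  shows "walk adj (xs @ tl ys) \<and> nb (xs @ tl ys)"
proof -
  have xne: "xs \<noteq> []" and yne: "ys \<noteq> []" using assms(1,3) by auto
  have xs: "xs = butlast xs @ [last xs]" using xne by simp
  have ys: "ys = hd ys # tl ys" using yne by simp
  have "walk adj (butlast xs @ last xs # tl ys) \<and> nb (butlast xs @ last xs # tl ys)"
  proof (rule join)
    show "walk adj (butlast xs @ [last xs])" "nb (butlast xs @ [last xs])" using assms(1,2) xs by metis+
    show "walk adj (last xs # tl ys)" "nb (last xs # tl ys)" using assms(3,4,5) ys by metis+
    show "butlast xs \<noteq> [] \<and> tl ys \<noteq> [] \<longrightarrow> last (butlast xs) \<noteq> hd (tl ys)"
    proof
      assume "butlast xs \<noteq> [] \<and> tl ys \<noteq> []"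
      then have "length xs \<ge> 2 \<and> length ys \<ge> 2" using xne yne
        by (cases xs; cases ys) (auto simp: Suc_le_eq)
      then show "last (butlast xs) \<noteq> hd (tl ys)" using assms(6) by blast
    qed
  qed
  moreover have "xs @ tl ys = butlast xs @ last xs # tl ys" using xne
    by (metis append_butlast_last_id append_Cons append_Nil append_assoc)
  ultimately show ?thesis by (simp only:)
qed

lemma reduce: "walk adj xs \<Longrightarrow> \<exists>ys. walk adj ys \<and> nb ys \<and> hd ys = hd xs \<and> last ys = last xs \<and> length ys \<le> length xs"
proof (induction xs)
  case Nil then show ?case by simp
next
  case (Cons x xs')
  show ?case
  proof (cases "xs' = []")
    case True then show ?thesis by (intro exI[of _ "[x]"]) simp
  next
    case False
    have wx: "walk adj xs'" using Cons.prems False walk_tl[of x xs'] by simp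
    obtain ys where ys: "walk adj ys" "nb ys" "hd ys = hd xs'" "last ys = last xs'" "length ys \<le> length xs'"
      using Cons.IH[OF wx] by blast
    obtain y ys' where y: "ys = y # ys'" using ys(1) by (cases ys) auto
    have axy: "adj x y" using Cons.prems False ys(3) y by (cases xs') auto
    show ?thesis
    proof (cases ys')
      case Nil
      then show ?thesis using y ys axy False by (intro exI[of _ "[x,y]"]) auto
    next
      case (Cons z zs)
      show ?thesis
      proof (cases "x = z")
        case True
        then show ?thesis using ys y Cons walk_tl[of y ys'] nb_tl[of y ys'] False
          by (intro exI[of _ ys']) auto
      next
        case False
        then show ?thesis using ys y Cons axy \<open>xs' \<noteq> []\<close> by (intro exI[of _ "x # ys"]) auto
      qed
    qed
  qed
qed

lemma walk_snoc: "walk adj xs \<Longrightarrow> adj (last xs) z \<Longrightarrow> walk adj (xs @ [z])"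
  by (induction adj xs rule: walk.induct) auto

lemma conn_walk: "adj\<^sup>*\<^sup>* x y \<Longrightarrow> \<exists>xs. walk adj xs \<and> hd xs = x \<and> last xs = y"
proof (induction rule: rtranclp_induct)
  case base then show ?case by (intro exI[of _ "[x]"]) simp
next
  case (step y z)
  then obtain xs where "walk adj xs" "hd xs = x" "last xs = y" by blast
  moreover have "walk adj (xs @ [z])" using calculation step(2) walk_snoc by blast
  ultimately show ?case by (intro exI[of _ "xs @ [z]"]) (cases xs; simp)
qed

lemma reduced_walk: "\<exists>xs. walk adj xs \<and> nb xs \<and> hd xs = x \<and> last xs = y"
  using conn_walk[OF conn[of x y]] reduce by metis

definition seg :: "(nat \<Rightarrow> 'v) \<Rightarrow> nat \<Rightarrow> nat \<Rightarrow> 'v list" where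
  "seg r a E = map (\<lambda>t. r (a + t)) [0..<Suc E]"

lemma seg_props:
  assumes "ray adj r"
  shows "walk adj (seg r a E)" "nb (seg r a E)" "hd (seg r a E) = r a" "last (seg r a E) = r (a + E)"
    "length (seg r a E) = Suc E" "\<And>i. i \<le> E \<Longrightarrow> seg r a E ! i = r (a + i)"
proof -
  show n: "\<And>i. i \<le> E \<Longrightarrow> seg r a E ! i = r (a + i)" unfolding seg_def
    by (simp del: upt_Suc add: nth_map_upt)
  show "length (seg r a E) = Suc E" by (simp add: seg_def)
  show "hd (seg r a E) = r a" by (simp add: seg_def hd_map del: upt_Suc)
  show "last (seg r a E) = r (a + E)" by (simp add: seg_def last_map del: upt_Suc)
  show "walk adj (seg r a E)" unfolding walk_nth
    using assms by (auto simp: seg_def ray_def simp del: upt_Suc)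
  show "nb (seg r a E)" unfolding nb_nth
    using assms by (auto simp: seg_def ray_def simp del: upt_Suc)
qed

lemma ray_inj_aux:
  assumes "ray adj r" "i < j" shows "r i \<noteq> r j"
proof
  assume e: "r i = r j"
  have d: "distinct (seg r i (j - i))" using T1 seg_props[OF assms(1)] by blast
  have l: "length (seg r i (j - i)) = Suc (j - i)" using seg_props(5)[OF assms(1)] .
  have "seg r i (j-i) ! 0 = seg r i (j-i) ! (j - i)" using seg_props(6)[OF assms(1)] assms(2) e by simp
  moreover have "0 \<noteq> j - i" using assms(2) by simp
  ultimately show False using nth_eq_iff_index_eq[OF d, of 0 "j - i"] l by simp
qed

lemma ray_inj: "ray adj r \<Longrightarrow> inj r"
  by (metis injI linorder_neqE_nat ray_inj_aux)

lemma walk_butlast: "walk adj xs \<Longrightarrow> length xs \<ge> 2 \<Longrightarrow> walk adj (butlast xs)"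
proof (induction adj xs rule: walk.induct)
  case (3 adj x y ys)
  then show ?case by (cases ys) auto
qed auto

lemma nb_butlast: "nb xs \<Longrightarrow> nb (butlast xs)"
proof (induction xs rule: nb.induct)
  case (1 x y z zs)
  then show ?case by (cases zs) auto
qed auto

lemma isom_walk: "isom adj f \<Longrightarrow> walk adj xs \<Longrightarrow> walk adj (map f xs)"
  by (induction adj xs rule: walk.induct) (auto simp: isom_def)

lemma inj_nb: "inj f \<Longrightarrow> nb xs \<Longrightarrow> nb (map f xs)"
  by (induction xs rule: nb.induct) (auto simp: inj_eq)

lemma butlast_rev': "butlast (rev xs) = rev (tl xs)"
  by (cases xs) auto

definition att :: "('v \<Rightarrow> 'v \<Rightarrow> bool) \<Rightarrow> ('v \<Rightarrow> 'v) \<Rightarrow> (nat \<Rightarrow> 'v) \<Rightarrow> nat \<Rightarrow> bool" where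
  "att adj' f r D \<longleftrightarrow> ray adj' r \<and> 0 < D \<and> (\<forall>n. f (r n) = r (n + D))"

lemma KL:
  assumes f: "isom adj f" and A1: "att adj f r D" and A2: "att adj f s D'"
  shows "same_end r s"
proof -
  have rr: "ray adj r" "0 < D" "\<And>n. f (r n) = r (n+D)" using A1 by (auto simp: att_def)
  have ss: "ray adj s" "0 < D'" "\<And>n. f (s n) = s (n+D')" using A2 by (auto simp: att_def)
  have injf: "inj f" using f by (simp add: isom_def bij_is_inj)
  define P where "P n \<longleftrightarrow> (\<exists>a b W. walk adj W \<and> nb W \<and> hd W = r a \<and> last W = s b \<and> length W = Suc n)" for n
  have ex: "\<exists>n. P n"
  proof -
    obtain W where W: "walk adj W" "nb W" "hd W = r 0" "last W = s 0" using reduced_walk by blast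
    then have "length W = Suc (length W - 1)" by (cases W) auto
    then show ?thesis using W unfolding P_def by blast
  qed
  define \<delta> where "\<delta> = (LEAST n. P n)"
  have Pd: "P \<delta>" unfolding \<delta>_def by (rule LeastI_ex[OF ex])
  have mn: "\<And>n. P n \<Longrightarrow> \<delta> \<le> n" unfolding \<delta>_def by (rule Least_le)
  obtain a b W where W: "walk adj W" "nb W" "hd W = r a" "last W = s b" "length W = Suc \<delta>"
    using Pd unfolding P_def by blast
  show ?thesis
  proof (cases "\<delta> = 0")
    case True
    then have "hd W = last W" using W(5) by (cases W) auto
    then have e0: "r a = s b" using W by simp
    have e1: "r (a + D) = s (b + D')" using rr(3)[of a] ss(3)[of b] e0 by (simp add: add.commute)
    have eqs: "seg r a D = seg s b D'"
      using T2[OF seg_props(1,2)[OF rr(1)] seg_props(1,2)[OF ss(1)]] seg_props(3,4)[OF rr(1)]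
        seg_props(3,4)[OF ss(1)] e0 e1 by simp
    have "length (seg r a D) = length (seg s b D')" using eqs by (rule arg_cong)
    then have DD: "D = D'" unfolding seg_props(5)[OF rr(1)] seg_props(5)[OF ss(1)] by simp
    have small: "r (a + t) = s (b + t)" if "t \<le> D" for t
      using seg_props(6)[OF rr(1) that, of a] seg_props(6)[OF ss(1), of t D' b] that DD eqs by metis
    have all: "r (a + t) = s (b + t)" for t
    proof (induction t rule: less_induct)
      case (less t)
      show ?case
      proof (cases "t \<le> D")
        case True then show ?thesis using small by simp
      next
        case False
        then have "t - D < t" using rr(2) by simp
        then have "r (a + (t - D)) = s (b + (t - D))" using less by blast
        then have "f (r (a + (t - D))) = f (s (b + (t - D)))" by simp
        then show ?thesis using rr(3) ss(3) DD False by (simp add: add.commute add.left_commute)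
      qed
    qed
    show ?thesis unfolding same_end_def
      by (rule exI[of _ a], rule exI[of _ b]) (metis all add.commute)
  next
    case False
    obtain w0 W' where Wc: "W = w0 # W'" using W(1) by (cases W) auto
    have W'ne: "W' \<noteq> []" using W(5) False Wc by auto
    have len2: "length W \<ge> 2" using W(5) False by simp
    define x where "x = hd (tl W)"
    define y where "y = last (butlast W)"
    have xr: "x \<notin> range r"
    proof
      assume "x \<in> range r" then obtain c where c: "x = r c" by blast
      have "P (\<delta> - 1)" unfolding P_def
      proof (intro exI conjI)
        show "walk adj (tl W)" using W(1) Wc W'ne walk_tl[of w0 W'] by simp
        show "nb (tl W)" using W(2) Wc nb_tl[of w0 W'] by simp
        show "hd (tl W) = r c" using c x_def by simp
        show "last (tl W) = s b" using W(4) Wc W'ne by simp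
        show "length (tl W) = Suc (\<delta> - 1)" using W(5) False by simp
      qed
      then show False using mn False by fastforce
    qed
    have ys: "y \<notin> range s"
    proof
      assume "y \<in> range s" then obtain c where c: "y = s c" by blast
      have "P (\<delta> - 1)" unfolding P_def
      proof (intro exI conjI)
        show "walk adj (butlast W)" using walk_butlast W(1) len2 by blast
        show "nb (butlast W)" using W(2) nb_butlast by blast
        show "hd (butlast W) = r a" using W(3) Wc W'ne by simp
        show "last (butlast W) = s c" using c y_def by simp
        show "length (butlast W) = Suc (\<delta> - 1)" using W(5) False by simp
      qed
      then show False using mn False by fastforce
    qed
    define R where "R = rev (seg r a D)"
    have R: "walk adj R" "nb R" "last R = r a" "hd R = r (a + D)" "length R = Suc D"
      "last (butlast R) = r (a + 1)"
    proof -
      show "walk adj R" "nb R" unfolding R_def using seg_props(1,2)[OF rr(1)] by (simp_all add: walk_rev nb_rev)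
      show "last R = r a" "hd R = r (a + D)" "length R = Suc D"
        unfolding R_def using seg_props(3,4,5)[OF rr(1)] by (simp_all add: last_rev hd_rev)
      have "length (tl (seg r a D)) = D" using seg_props(5)[OF rr(1), of a D] by simp
      then have "tl (seg r a D) \<noteq> []" using rr(2) by (metis gr_implies_not0 list.size(3))
      then have "hd (tl (seg r a D)) = seg r a D ! 1"
        using hd_conv_nth[of "tl (seg r a D)"] nth_tl[of 0 "seg r a D"] seg_props(5)[OF rr(1), of a D] rr(2) by simp
      then show "last (butlast R) = r (a + 1)" unfolding R_def butlast_rev' last_rev
        using seg_props(6)[OF rr(1), where i=1 and a=a and E=D] rr(2) by simp
    qed
    define V1 where "V1 = R @ tl W"
    have V1: "walk adj V1 \<and> nb V1" unfolding V1_def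
    proof (rule join2)
      show "walk adj R" "nb R" "walk adj W" "nb W" using R W by auto
      show "last R = hd W" using R W by simp
      show "2 \<le> length R \<and> 2 \<le> length W \<longrightarrow> last (butlast R) \<noteq> hd (tl W)"
        using R(6) xr unfolding x_def by (metis rangeI)
    qed
    define S where "S = seg s b D'"
    have S: "walk adj S" "nb S" "hd S = s b" "last S = s (b + D')" "length S = Suc D'"
      "hd (tl S) = s (b + 1)"
    proof -
      show "walk adj S" "nb S" "hd S = s b" "last S = s (b + D')" "length S = Suc D'"
        unfolding S_def using seg_props[OF ss(1)] by auto
      have "length (tl (seg s b D')) = D'" using seg_props(5)[OF ss(1), of b D'] by simp
      then have "tl (seg s b D') \<noteq> []" using ss(2) by (metis gr_implies_not0 list.size(3))
      then have "hd (tl (seg s b D')) = seg s b D' ! 1"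
        using hd_conv_nth[of "tl (seg s b D')"] nth_tl[of 0 "seg s b D'"] seg_props(5)[OF ss(1), of b D'] ss(2) by simp
      then show "hd (tl S) = s (b + 1)" unfolding S_def
        using seg_props(6)[OF ss(1), where i=1 and a=b and E=D'] ss(2) by simp
    qed
    have lbV1: "last (butlast V1) = y"
      unfolding V1_def y_def Wc using W'ne R(3) W(3) Wc
      by (cases "butlast W'") (auto simp: butlast_append)
    define V where "V = V1 @ tl S"
    have V: "walk adj V \<and> nb V" unfolding V_def
    proof (rule join2)
      show "walk adj V1" "nb V1" using V1 by auto
      show "walk adj S" "nb S" using S by auto
      show "last V1 = hd S" unfolding V1_def using W(4) Wc W'ne S(3) by simp
      show "2 \<le> length V1 \<and> 2 \<le> length S \<longrightarrow> last (butlast V1) \<noteq> hd (tl S)"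
        using lbV1 S(6) ys by (metis rangeI)
    qed
    have Rne: "R \<noteq> []" using R(5) by (metis list.size(3) nat.distinct(1))
    have hV: "hd V = r (a + D)" unfolding V_def V1_def using R(4) Rne by simp
    have "length (tl S) = D'" using S(5) by simp
    then have tSne: "tl S \<noteq> []" using ss(2) by (metis gr_implies_not0 list.size(3))
    have lV: "last V = s (b + D')" unfolding V_def using S(4) tSne by (simp add: last_tl)
    have M: "walk adj (map f W)" "nb (map f W)" "hd (map f W) = r (a + D)" "last (map f W) = s (b + D')"
      using isom_walk[OF f W(1)] inj_nb[OF injf W(2)] W(3,4) rr(3) ss(3) Wc W'ne
      by (auto simp: hd_map last_map)
    have "V = map f W" using T2 V M hV lV by metis
    then have "length V = length W" by simp
    moreover have "length V = Suc D + \<delta> + D'" unfolding V_def V1_def using R(5) S(5) W(5) by simp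
    ultimately show ?thesis using W(5) rr(2) by simp
  qed
qed


lemma same_end_refl: "same_end r r"
  unfolding same_end_def by blast

lemma same_end_sym: "same_end r s \<Longrightarrow> same_end s r"
  unfolding same_end_def by metis

lemma same_end_trans: "same_end r s \<Longrightarrow> same_end s t \<Longrightarrow> same_end r t"
proof -
  assume "same_end r s" "same_end s t"
  then obtain k m k' m' where 1: "\<And>n. r (n + k) = s (n + m)" and 2: "\<And>n. s (n + k') = t (n + m')"
    unfolding same_end_def by blast
  have "r (n + (k + k')) = t (n + (m + m'))" for n
    using 1[of "n + k'"] 2[of "n + m"] by (simp add: ac_simps)
  then show ?thesis unfolding same_end_def by blast
qed

lemma same_end_comp: "same_end r s \<Longrightarrow> same_end (g \<circ> r) (g \<circ> s)"
  unfolding same_end_def o_def by metis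

lemma same_end_tail: "same_end (\<lambda>n. r (n + k)) r"
  unfolding same_end_def by (rule exI[of _ 0], rule exI[of _ k]) simp

lemma isom_id: "isom adj id" by (simp add: isom_def)

lemma isom_comp: "isom adj f \<Longrightarrow> isom adj g \<Longrightarrow> isom adj (f \<circ> g)"
  by (auto simp: isom_def bij_comp)

lemma isom_inv: "isom adj f \<Longrightarrow> isom adj (inv f)"
proof -
  assume f: "isom adj f"
  then have b: "bij f" by (simp add: isom_def)
  have "adj x y \<longleftrightarrow> adj (inv f x) (inv f y)" for x y
    using f unfolding isom_def by (metis b bij_inv_eq_iff)
  then show ?thesis using b bij_imp_bij_inv by (auto simp: isom_def)
qed

lemma isom_pow: "isom adj f \<Longrightarrow> isom adj (f ^^ n)"
  by (induction n) (auto simp: isom_id isom_comp)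

lemma isom_bij: "isom adj f \<Longrightarrow> bij f" by (simp add: isom_def)

lemma isom_app: "isom adj F \<Longrightarrow> adj x y \<Longrightarrow> x \<noteq> z \<Longrightarrow> adj (F x) (F y) \<and> F x \<noteq> F z"
  unfolding isom_def by (metis bij_is_inj inj_eq)

lemma ray_comp: "isom adj g \<Longrightarrow> ray adj r \<Longrightarrow> ray adj (g \<circ> r)"
  unfolding ray_def isom_def by (auto simp: bij_is_inj inj_eq)

lemma att_ray: "att adj f r D \<Longrightarrow> ray adj r" by (simp add: att_def)

lemma att_fix: "att adj f r D \<Longrightarrow> same_end (f \<circ> r) r"
  unfolding att_def same_end_def by (rule exI[of _ 0], rule exI[of _ D]) simp

lemma att_pow_shift: "att adj f r D \<Longrightarrow> (f ^^ j) (r n) = r (n + j * D)"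
  by (induction j arbitrary: n) (auto simp: att_def ac_simps)

lemma att_pow: "att adj f r D \<Longrightarrow> 0 < j \<Longrightarrow> att adj (f ^^ j) r (j * D)"
  using att_pow_shift[of f r D j] by (auto simp: att_def)

lemma att_inv_shift: "att adj f r D \<Longrightarrow> bij f \<Longrightarrow> inv f (r (n + D)) = r n"
  unfolding att_def by (metis bij_is_inj inv_f_f)

lemma AR:
  assumes A: "att adj f r D" and B: "att adj (inv f) s D'" and b: "bij f"
  shows "\<not> same_end r s"
proof
  assume "same_end r s"
  then obtain a c where e: "\<And>n. r (n + a) = s (n + c)" unfolding same_end_def by blast
  have fs: "f (s (m + D')) = s m" for m
    using B b unfolding att_def by (metis bij_inv_eq_iff)
  have "r (D' + a + D) = f (r (D' + a))" using A unfolding att_def by simp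
  also have "\<dots> = f (s (D' + c))" using e[of D'] by simp
  also have "\<dots> = s c" using fs[of c] by (simp add: add.commute)
  also have "\<dots> = r a" using e[of 0] by simp
  finally have "r (D' + a + D) = r a" .
  moreover have "a < D' + a + D" using A unfolding att_def by simp
  ultimately show False using ray_inj_aux[OF att_ray[OF A]] by metis
qed

lemma rep:
  assumes f: "isom adj f" and A: "att adj f r D"
  shows "\<exists>s. att adj (inv f) s D \<and> \<not> same_end r s"
proof -
  have b: "bij f" using f isom_def by blast
  have rr: "ray adj r" "0 < D" using A by (auto simp: att_def)
  let ?g = "inv f"
  have gi: "isom adj (?g ^^ j)" for j using isom_pow isom_inv f by blast
  define G where "G n j = (?g ^^ j) (r (j * D - n))" for n j
  have step: "n \<le> j * D \<Longrightarrow> G n (Suc j) = G n j" for n j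
  proof -
    assume h: "n \<le> j * D"
    have "Suc j * D - n = (j * D - n) + D" using h by simp
    then have "G n (Suc j) = (?g ^^ j) (?g (r ((j * D - n) + D)))"
      unfolding G_def by (simp add: funpow_Suc_right del: funpow.simps)
    also have "\<dots> = G n j" unfolding G_def using att_inv_shift[OF A b] by simp
    finally show ?thesis .
  qed
  have mono: "n \<le> j * D \<Longrightarrow> G n (j + k) = G n j" for n j k
  proof (induction k)
    case (Suc k)
    have "n \<le> (j + k) * D" using Suc.prems by (metis add_leD1 add_mult_distrib le_trans order_refl)
    then show ?case using step[of n "j + k"] Suc by simp
  qed simp
  have nD: "n \<le> n * D" for n using rr(2) by simp
  define s where "s n = G n n" for n
  have sf: "n \<le> j * D \<Longrightarrow> s n = G n j" for n j
    unfolding s_def using mono[of n j n] mono[of n n j] nD[of n] by (simp add: add.commute)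
  have rs: "ray adj s" unfolding ray_def
  proof
    fix n :: nat
    let ?j = "n + 2"
    have le: "n + 2 \<le> ?j * D" using nD[of "n+2"] by simp
    define m where "m = ?j * D - (n + 2)"
    have e0: "?j * D - n = m + 2" and e1: "?j * D - Suc n = m + 1" and e2: "?j * D - Suc (Suc n) = m"
      using le unfolding m_def by simp_all
    have s0: "s n = (?g ^^ ?j) (r (m + 2))" using sf[of n ?j, unfolded G_def e0] le by simp
    have s1: "s (Suc n) = (?g ^^ ?j) (r (m + 1))" using sf[of "Suc n" ?j, unfolded G_def e1] le by simp
    have s2: "s (Suc (Suc n)) = (?g ^^ ?j) (r m)" using sf[of "Suc (Suc n)" ?j, unfolded G_def e2] le by simp
    have "adj (r (m+1)) (r (m+2))" using rr(1) unfolding ray_def by (metis add_2_eq_Suc' add_Suc_right add.commute plus_1_eq_Suc)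
    then have a: "adj (r (m+2)) (r (m+1))" by (rule symm)
    have d: "r (m + 2) \<noteq> r m" using rr(1) unfolding ray_def by (metis add_2_eq_Suc')
    have ii: "inj (?g ^^ ?j)" using gi[of ?j] by (simp add: isom_def bij_is_inj)
    show "adj (s n) (s (Suc n)) \<and> s n \<noteq> s (Suc (Suc n))"
      unfolding s0 s1 s2 by (rule isom_app[OF gi a d])
  qed
  have "?g (s n) = s (n + D)" for n
  proof -
    have "s (n + D) = G (n + D) (Suc n)" using sf[of "n + D" "Suc n"] nD[of n] by simp
    also have "\<dots> = ?g (G n n)" unfolding G_def using nD[of n] by (simp add: diff_add_inverse2)
    finally show ?thesis unfolding s_def by simp
  qed
  then have As: "att adj ?g s D" using rs rr(2) by (simp add: att_def)
  then show ?thesis using AR[OF A As b] by blast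
qed

lemma fixed_end_att:
  assumes f: "isom adj f" and nf: "\<And>v. f v \<noteq> v" and r: "ray adj r" and fx: "same_end (f \<circ> r) r"
  shows "\<exists>k d. att adj f (\<lambda>n. r (n + k)) d \<or> att adj (inv f) (\<lambda>n. r (n + k)) d"
proof -
  obtain k m where e: "\<And>n. f (r (n + k)) = r (n + m)" using fx unfolding same_end_def by auto
  have b: "bij f" using f isom_def by blast
  have rk: "ray adj (\<lambda>n. r (n + k))" "ray adj (\<lambda>n. r (n + m))" using r unfolding ray_def by auto
  consider "m = k" | "k < m" | "m < k" by linarith
  then show ?thesis
  proof cases
    case 1 then show ?thesis using e[of 0] nf by simp
  next
    case 2
    have "f (r (n + k)) = r (n + (m - k) + k)" for n using e[of n] 2 by simp
    then have "att adj f (\<lambda>n. r (n + k)) (m - k)" using rk 2 by (simp add: att_def)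
    then show ?thesis by blast
  next
    case 3
    have "inv f (r (n + m)) = r (n + (k - m) + m)" for n using e[of n] 3 b
      by (metis add.commute add.left_commute bij_is_inj inv_f_f le_add_diff_inverse2 less_imp_le)
    then have "att adj (inv f) (\<lambda>n. r (n + m)) (k - m)" using rk 3 by (simp add: att_def)
    then show ?thesis by blast
  qed
qed

end

lemma gg_gen: "S \<subseteq> gen_group S" unfolding gen_group_def by blast
lemma gg_id: "id \<in> gen_group S" unfolding gen_group_def by blast
lemma gg_comp: "f \<in> gen_group S \<Longrightarrow> g \<in> gen_group S \<Longrightarrow> f \<circ> g \<in> gen_group S"
  unfolding gen_group_def by blast
lemma gg_inv: "f \<in> gen_group S \<Longrightarrow> inv f \<in> gen_group S"
  unfolding gen_group_def by blast
lemma gg_sub: "S \<subseteq> H \<Longrightarrow> id \<in> H \<Longrightarrow> (\<forall>f\<in>H. \<forall>g\<in>H. f \<circ> g \<in> H) \<Longrightarrow> (\<forall>f\<in>H. inv f \<in> H)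
  \<Longrightarrow> gen_group S \<subseteq> H"
  unfolding gen_group_def by blast

lemma pigeon: "infinite A \<Longrightarrow> f ` A \<subseteq> B \<Longrightarrow> finite B \<Longrightarrow> \<exists>x\<in>A. \<exists>y\<in>A. x \<noteq> y \<and> f x = f y"
  by (meson inj_onI inj_on_finite)

lemma inv_comm: "bij a \<Longrightarrow> (\<And>x. a (b x) = b (a x)) \<Longrightarrow> inv a (b x) = b (inv a x)"
  by (metis bij_inv_eq_iff)

lemma disc_F:
  assumes "discrete_subgroup G" "id \<in> G"
  shows "\<exists>F. finite F \<and> (\<forall>c\<in>G. (\<forall>x\<in>F. c x = x) \<longrightarrow> c = id)"
proof -
  let ?X = "product_topology (\<lambda>_. discrete_topology (UNIV::'a set)) (UNIV::'a set)"
  have "openin (discrete_topology G) {id}" using assms(2) by simp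
  then have "openin (subtopology ?X G) {id}" using assms(1) unfolding discrete_subgroup_def by simp
  then obtain U where U: "openin ?X U" "{id} = U \<inter> G" by (auto simp: openin_subtopology)
  then have "id \<in> U" by auto
  then obtain V where V: "finite {i \<in> UNIV. V i \<noteq> topspace (discrete_topology UNIV)}"
    "id \<in> Pi\<^sub>E UNIV V" "Pi\<^sub>E UNIV V \<subseteq> U"
    using U(1) unfolding openin_product_topology_alt by blast
  define F where "F = {i. V i \<noteq> UNIV}"
  have fF: "finite F" using V(1) unfolding F_def by simp
  have "c = id" if c: "c \<in> G" "\<forall>x\<in>F. c x = x" for c
  proof -
    have "c \<in> Pi\<^sub>E UNIV V"
    proof (unfold PiE_UNIV_domain, rule Pi_I)
      fix i
      show "c i \<in> V i"
      proof (cases "i \<in> F")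
        case True
        then have "c i = id i" using c by simp
        moreover have "id i \<in> V i" using V(2) by (simp add: PiE_UNIV_domain Pi_iff)
        ultimately show ?thesis by simp
      next
        case False then show ?thesis unfolding F_def by simp
      qed
    qed
    then have "c \<in> U \<inter> G" using V(3) c(1) by blast
    then show ?thesis using U(2) by blast
  qed
  then show ?thesis using fF by blast
qed


lemma (in tree) FS_lemma:
  assumes lf: "\<And>x. finite {y. adj x y}" and F: "finite F"
    and Fp: "\<forall>c\<in>G. (\<forall>x\<in>F. c x = x) \<longrightarrow> c = id"
    and Gc: "\<And>f g. f \<in> G \<Longrightarrow> g \<in> G \<Longrightarrow> f \<circ> g \<in> G"
    and Gi: "\<And>f. f \<in> G \<Longrightarrow> inv f \<in> G"
    and Gs: "\<And>f. f \<in> G \<Longrightarrow> isom adj f"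
  shows "finite {c \<in> G. c v = v}"
proof -
  have fk: "finite {y. (adj ^^ k) v y}" for k
  proof (induction k)
    case 0 then show ?case by simp
  next
    case (Suc k)
    have "{y. (adj ^^ Suc k) v y} = (\<Union>z\<in>{z. (adj ^^ k) v z}. {y. adj z y})"
      by (auto simp: relpowp_Suc_right)
    then show ?case using Suc lf by simp
  qed
  have "\<exists>k. (adj ^^ k) v x" for x using conn[of v x] rtranclp_power by metis
  then obtain kf where kf: "\<And>x. (adj ^^ kf x) v x" by metis
  define N where "N = Max (insert 0 (kf ` F))"
  define B where "B = {y. \<exists>k\<le>N. (adj ^^ k) v y}"
  have "B = (\<Union>k\<in>{..N}. {y. (adj ^^ k) v y})" unfolding B_def by auto
  then have fB: "finite B" using fk by simp
  have FB: "F \<subseteq> B"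
  proof
    fix x assume "x \<in> F"
    then have "kf x \<le> N" unfolding N_def using F by simp
    then show "x \<in> B" unfolding B_def using kf by blast
  qed
  have pres: "(adj ^^ k) v (c y)" if "isom adj c" "c v = v" "(adj ^^ k) v y" for c k y
    using that(3)
  proof (induction k arbitrary: y)
    case 0 then show ?case using that(2) by simp
  next
    case (Suc k)
    then obtain z where "(adj ^^ k) v z" "adj z y" by (auto simp: relpowp_Suc_right)
    moreover have "adj (c z) (c y)" using that(1) calculation(2) unfolding isom_def by blast
    ultimately show ?case using Suc.IH by (auto simp: relpowp_Suc_right)
  qed
  define \<phi> where "\<phi> c = restrict c B" for c :: "'v \<Rightarrow> 'v"
  have img: "\<phi> ` {c \<in> G. c v = v} \<subseteq> Pi\<^sub>E B (\<lambda>_. B)"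
  proof
    fix f assume "f \<in> \<phi> ` {c \<in> G. c v = v}"
    then obtain c where c: "c \<in> G" "c v = v" "f = \<phi> c" by blast
    have "\<forall>i\<in>B. c i \<in> B" unfolding B_def using pres[OF Gs[OF c(1)] c(2)] by blast
    then show "f \<in> Pi\<^sub>E B (\<lambda>_. B)" unfolding c(3) \<phi>_def by (simp add: restrict_PiE_iff)
  qed
  have inj: "inj_on \<phi> {c \<in> G. c v = v}"
  proof (rule inj_onI)
    fix c d assume c: "c \<in> {c \<in> G. c v = v}" and d: "d \<in> {c \<in> G. c v = v}" and e: "\<phi> c = \<phi> d"
    have cd: "c x = d x" if "x \<in> B" for x using e that unfolding \<phi>_def by (metis restrict_apply')
    have bd: "bij d" using d Gs isom_def by blast
    have eG: "inv d \<circ> c \<in> G" using Gc Gi c d by blast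
    have "\<forall>x\<in>F. (inv d \<circ> c) x = x" using cd FB bd by (auto simp: bij_is_inj)
    then have "inv d \<circ> c = id" using Fp eG by blast
    then have "inv d (c x) = x" for x by (metis comp_apply id_apply)
    then have "c x = d x" for x using bd by (metis bij_inv_eq_iff)
    then show "c = d" by auto
  qed
  show ?thesis using inj_on_finite[OF inj img] fB by (simp add: finite_PiE)
qed

locale grp = tree adj for adj :: "'v \<Rightarrow> 'v \<Rightarrow> bool" +
  fixes G :: "('v \<Rightarrow> 'v) set"
  assumes Gid: "id \<in> G"
    and Gcomp: "f \<in> G \<Longrightarrow> g \<in> G \<Longrightarrow> f \<circ> g \<in> G"
    and Ginv: "f \<in> G \<Longrightarrow> inv f \<in> G"
    and Gisom: "f \<in> G \<Longrightarrow> isom adj f"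
    and FS: "finite {c \<in> G. c v = v}"
begin

lemma Gpow: "f \<in> G \<Longrightarrow> f ^^ n \<in> G"
  by (induction n) (auto simp: Gid Gcomp)

lemma Gbij: "f \<in> G \<Longrightarrow> bij f" using Gisom isom_def by blast

lemma no_fix:
  assumes h: "h \<in> G" and io: "\<forall>n::nat. n > 0 \<longrightarrow> (h ^^ n) \<noteq> id" and n: "0 < n"
  shows "(h ^^ n) v \<noteq> v"
proof
  assume fx: "(h ^^ n) v = v"
  let ?k = "h ^^ n"
  have kG: "?k ^^ j \<in> G" for j using Gpow h by blast
  have kv: "(?k ^^ j) v = v" for j by (induction j) (use fx in auto)
  have "(\<lambda>j. ?k ^^ j) ` UNIV \<subseteq> {c \<in> G. c v = v}" using kG kv by auto
  then obtain a b where ab: "a \<noteq> b" "?k ^^ a = ?k ^^ b" using pigeon[OF infinite_UNIV_nat _ FS] by blast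
  have key: "?k ^^ (b - a) = id" if "a < b" "?k ^^ a = ?k ^^ b" for a b
  proof -
    have bk: "bij (?k ^^ a)" using Gbij kG by blast
    have "?k ^^ b = ?k ^^ (b - a) \<circ> ?k ^^ a" using that(1) by (metis funpow_add le_add_diff_inverse2 less_imp_le)
    then have "(?k ^^ (b - a)) ((?k ^^ a) x) = (?k ^^ a) x" for x using that(2) by (metis comp_apply)
    then have "(?k ^^ (b - a)) y = y" for y using bk by (metis bij_inv_eq_iff)
    then show ?thesis by auto
  qed
  obtain d where d: "0 < d" "?k ^^ d = id"
  proof (cases "a < b")
    case True then show ?thesis using key[OF True ab(2)] that[of "b - a"] by simp
  next
    case False then have "b < a" using ab(1) by simp
    then show ?thesis using key[of b a] ab(2) that[of "a - b"] by simp
  qed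
  then have "h ^^ (n * d) = id" by (simp add: funpow_mult)
  then show False using io n d(1) by simp
qed

lemma DL:
  assumes fG: "f \<in> G" and A: "att adj f r D" and cG: "c \<in> G" and cf: "\<And>n. N \<le> n \<Longrightarrow> c (r n) = r n"
  shows "\<exists>p>0. \<forall>x. c ((f ^^ p) x) = (f ^^ p) (c x)"
proof -
  have b: "bij f" using Gbij fG by blast
  have FI: "(f ^^ j) ((inv f ^^ j) x) = x" for j x using fun_cong[OF fn_o_inv_fn_is_id[OF b, of j], of x] by simp
  have IF: "(inv f ^^ j) ((f ^^ j) x) = x" for j x using fun_cong[OF inv_fn_o_fn_is_id[OF b, of j], of x] by simp
  have D: "0 < D" using A unfolding att_def by blast
  define cj where "cj j = (inv f ^^ j) \<circ> c \<circ> (f ^^ j)" for j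
  have cjG: "cj j \<in> G" for j unfolding cj_def by (rule Gcomp[OF Gcomp[OF Gpow[OF Ginv[OF fG]] cG] Gpow[OF fG]])
  have cjfix: "cj j (r 0) = r 0" if "N \<le> j" for j
  proof -
    have "(f ^^ j) (r 0) = r (j * D)" using att_pow_shift[OF A, where j=j and n=0] by simp
    have "j \<le> j * D" using D by simp
    moreover have "N \<le> j * D" using that \<open>j \<le> j * D\<close> by linarith
    moreover have "(f ^^ j) (r 0) = r (j * D)" by fact
    ultimately have "c ((f ^^ j) (r 0)) = (f ^^ j) (r 0)" using cf by simp
    then show ?thesis unfolding cj_def using IF by simp
  qed
  have "cj ` {N..} \<subseteq> {c \<in> G. c (r 0) = r 0}" using cjG cjfix by auto
  then obtain j j' where jj: "j \<noteq> j'" "cj j = cj j'" using pigeon[OF infinite_Ici _ FS] by blast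
  have key: "\<forall>x. c ((f ^^ (j' - j)) x) = (f ^^ (j' - j)) (c x)" if "j < j'" "cj j = cj j'" for j j'
  proof
    fix x
    let ?p = "j' - j"
    have sp: "f ^^ j' = f ^^ ?p \<circ> f ^^ j" using that(1) by (metis funpow_add le_add_diff_inverse2 less_imp_le)
    define y where "y = (inv f ^^ j) x"
    have fy: "(f ^^ j) y = x" unfolding y_def using FI by simp
    have "(inv f ^^ j) (c ((f ^^ j) y)) = (inv f ^^ j') (c ((f ^^ j') y))"
      using that(2) unfolding cj_def by (metis comp_apply)
    then have "(f ^^ j') ((inv f ^^ j) (c ((f ^^ j) y))) = c ((f ^^ j') y)" using FI by simp
    moreover have "(f ^^ j') ((inv f ^^ j) z) = (f ^^ ?p) z" for z using sp FI by simp
    ultimately have "(f ^^ ?p) (c x) = c ((f ^^ j') y)" using fy by simp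
    also have "\<dots> = c ((f ^^ ?p) x)" using sp fy by simp
    finally show "c ((f ^^ ?p) x) = (f ^^ ?p) (c x)" by simp
  qed
  show ?thesis
  proof (cases "j < j'")
    case True then show ?thesis using key[OF True jj(2)] by (intro exI[of _ "j' - j"]) simp
  next
    case False then have "j' < j" using jj(1) by simp
    then show ?thesis using key[of j' j] jj(2) by (intro exI[of _ "j - j'"]) simp
  qed
qed


lemma se_inv: "bij g \<Longrightarrow> same_end (g \<circ> s) t \<Longrightarrow> same_end (inv g \<circ> t) s"
proof -
  assume b: "bij g" and e: "same_end (g \<circ> s) t"
  have "inv g \<circ> (g \<circ> s) = s" using b by (auto simp: bij_is_inj)
  then have "same_end s (inv g \<circ> t)" using same_end_comp[OF e, of "inv g"] by simp
  then show ?thesis by (rule same_end_sym)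
qed

lemma fix_inv: "bij g \<Longrightarrow> same_end (inv g \<circ> s) s \<Longrightarrow> same_end (g \<circ> s) s"
  using se_inv[of "inv g" s s] by (simp add: bij_imp_bij_inv inv_inv_eq)

lemma comm_fix:
  assumes gG: "g \<in> G" and fG: "f \<in> G" and p: "0 < p" and cm: "\<And>x. g ((f ^^ p) x) = (f ^^ p) (g x)"
    and B: "att adj (inv f) s D'"
  shows "same_end (g \<circ> s) s"
proof -
  have b: "bij f" using Gbij fG by blast
  have bp: "bij (f ^^ p)" using Gbij Gpow fG by blast
  have cm': "(inv f ^^ p) (g x) = g ((inv f ^^ p) x)" for x
    using inv_comm[OF bp, of g x] cm inv_fn[OF b, of p] by metis
  have Bp: "att adj (inv f ^^ p) s (p * D')" by (rule att_pow[OF B p])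
  have Bg: "att adj (inv f ^^ p) (g \<circ> s) (p * D')"
    using Bp cm' ray_comp[OF Gisom[OF gG] att_ray[OF B]] unfolding att_def by simp
  have "same_end s (g \<circ> s)" by (rule KL[OF isom_pow[OF isom_inv[OF Gisom[OF fG]]] Bp Bg])
  then show ?thesis by (rule same_end_sym)
qed

lemma tail_fix:
  assumes gG: "g \<in> G" and fG: "f \<in> G" and A: "att adj f r D" and B: "att adj (inv f) s D'"
    and gf: "\<And>n. N \<le> n \<Longrightarrow> g (r n) = r n"
  shows "same_end (g \<circ> s) s"
proof -
  obtain p where "0 < p" "\<And>x. g ((f ^^ p) x) = (f ^^ p) (g x)" using DL[OF fG A gG gf] by blast
  then show ?thesis using comm_fix[OF gG fG _ _ B] by blast
qed

lemma hyp_case: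
  assumes fG: "f \<in> G" and nf: "\<And>p v. 0 < p \<Longrightarrow> (f ^^ p) v \<noteq> v"
    and A: "att adj f r D" and B: "att adj (inv f) s D'"
    and gG: "g \<in> G" and Ag: "att adj g r' e" and rr: "same_end r' r"
  shows "same_end (g \<circ> s) s"
proof -
  have b: "bij f" using Gbij fG by blast
  have bg: "bij g" using Gbij gG by blast
  have FI: "(f ^^ j) ((inv f ^^ j) x) = x" for j x using fun_cong[OF fn_o_inv_fn_is_id[OF b, of j], of x] by simp
  have IF: "(inv f ^^ j) ((f ^^ j) x) = x" for j x using fun_cong[OF inv_fn_o_fn_is_id[OF b, of j], of x] by simp
  have D: "0 < D" using A unfolding att_def by blast
  have e: "0 < e" using Ag unfolding att_def by blast
  obtain k1 m1 where t: "\<And>n. r' (n + k1) = r (n + m1)" using rr unfolding same_end_def by blast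
  define c where "c = (g ^^ D) \<circ> (inv f ^^ e)"
  have cG: "c \<in> G" unfolding c_def by (rule Gcomp[OF Gpow[OF gG] Gpow[OF Ginv[OF fG]]])
  have cfix: "c (r n) = r n" if "m1 + e * D \<le> n" for n
  proof -
    define t0 where "t0 = n - m1 - e * D"
    have n: "n = t0 + m1 + e * D" using that unfolding t0_def by simp
    have "(f ^^ e) (r (t0 + m1)) = r n" using att_pow_shift[OF A, where j=e and n="t0+m1"] n by simp
    then have 1: "(inv f ^^ e) (r n) = r (t0 + m1)" using IF by metis
    have "(g ^^ D) (r' (t0 + k1)) = r' ((t0 + D * e) + k1)"
      using att_pow_shift[OF Ag, where j=D and n="t0+k1"] by (simp add: ac_simps)
    then have "(g ^^ D) (r (t0 + m1)) = r ((t0 + D * e) + m1)" using t by metis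
    then show ?thesis using 1 n unfolding c_def by (simp add: ac_simps)
  qed
  obtain p where p: "0 < p" and cm: "\<And>x. c ((f ^^ p) x) = (f ^^ p) (c x)"
    using DL[OF fG A cG cfix] by blast
  have gD: "(g ^^ D) x = c ((f ^^ e) x)" for x unfolding c_def using IF by simp
  have fc: "(f ^^ e) ((f ^^ p) x) = (f ^^ p) ((f ^^ e) x)" for x
    by (metis add.commute comp_apply funpow_add)
  have gDc: "(g ^^ D) ((f ^^ p) x) = (f ^^ p) ((g ^^ D) x)" for x
    unfolding gD fc cm by simp
  obtain \<eta> where Ae: "att adj (inv g) \<eta> e" and ne: "\<not> same_end r' \<eta>"
    using rep[OF Gisom[OF gG] Ag] by blast
  have Aeta: "att adj (inv g ^^ D) \<eta> (D * e)" by (rule att_pow[OF Ae D])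
  have bgD: "bij (g ^^ D)" using Gbij Gpow gG by blast
  have cm2: "(inv g ^^ D) ((f ^^ p) x) = (f ^^ p) ((inv g ^^ D) x)" for x
    using inv_comm[OF bgD, of "f ^^ p" x] gDc inv_fn[OF bg, of D] by metis
  have Aeta2: "att adj (inv g ^^ D) ((f ^^ p) \<circ> \<eta>) (D * e)"
    using Aeta cm2 ray_comp[OF isom_pow[OF Gisom[OF fG]] att_ray[OF Ae]] unfolding att_def by simp
  have "same_end \<eta> ((f ^^ p) \<circ> \<eta>)"
    by (rule KL[OF isom_pow[OF isom_inv[OF Gisom[OF gG]]] Aeta Aeta2])
  then have fe: "same_end ((f ^^ p) \<circ> \<eta>) \<eta>" by (rule same_end_sym)
  obtain k d where kd: "att adj (f ^^ p) (\<lambda>n. \<eta> (n + k)) d \<or> att adj (inv (f ^^ p)) (\<lambda>n. \<eta> (n + k)) d"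
    using fixed_end_att[OF isom_pow[OF Gisom[OF fG]] nf[OF p] att_ray[OF Ae] fe] by blast
  have etak: "same_end (\<lambda>n. \<eta> (n + k)) \<eta>" by (rule same_end_tail)
  show ?thesis
  proof (cases "att adj (f ^^ p) (\<lambda>n. \<eta> (n + k)) d")
    case True
    have "same_end r (\<lambda>n. \<eta> (n + k))" by (rule KL[OF isom_pow[OF Gisom[OF fG]] att_pow[OF A p] True])
    then have "same_end r' \<eta>" using rr etak same_end_trans by blast
    then show ?thesis using ne by blast
  next
    case False
    then have Ak: "att adj (inv f ^^ p) (\<lambda>n. \<eta> (n + k)) d" using kd inv_fn[OF b, of p] by simp
    have "same_end s (\<lambda>n. \<eta> (n + k))" by (rule KL[OF isom_pow[OF isom_inv[OF Gisom[OF fG]]] att_pow[OF B p] Ak])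
    then have se: "same_end s \<eta>" using etak same_end_trans by blast
    have "same_end (inv g \<circ> \<eta>) \<eta>" by (rule att_fix[OF Ae])
    then have ge: "same_end (g \<circ> \<eta>) \<eta>" by (rule fix_inv[OF bg])
    have "same_end (g \<circ> s) (g \<circ> \<eta>)" by (rule same_end_comp[OF se])
    then show ?thesis using ge se same_end_trans same_end_sym by blast
  qed
qed

lemma other_end:
  assumes fG: "f \<in> G" and nf: "\<And>p v. 0 < p \<Longrightarrow> (f ^^ p) v \<noteq> v"
    and A: "att adj f r D" and B: "att adj (inv f) s D'"
    and gG: "g \<in> G" and gr: "same_end (g \<circ> r) r"
  shows "same_end (g \<circ> s) s"
proof -
  have bg: "bij g" using Gbij gG by blast
  have r: "ray adj r" using A att_ray by blast
  obtain k m where e: "\<And>n. g (r (n + k)) = r (n + m)" using gr unfolding same_end_def by auto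
  have rk: "ray adj (\<lambda>n. r (n + k))" "ray adj (\<lambda>n. r (n + m))" using r unfolding ray_def by auto
  consider "m = k" | "k < m" | "m < k" by linarith
  then show ?thesis
  proof cases
    case 1
    have "g (r n) = r n" if "k \<le> n" for n using e[of "n - k"] that 1 by simp
    then show ?thesis using tail_fix[OF gG fG A B] by blast
  next
    case 2
    have "g (r (n + k)) = r (n + (m - k) + k)" for n using e[of n] 2 by simp
    then have "att adj g (\<lambda>n. r (n + k)) (m - k)" using rk 2 by (simp add: att_def)
    then show ?thesis using hyp_case[OF fG nf A B gG _ same_end_tail] by blast
  next
    case 3
    have "inv g (r (n + m)) = r (n + (k - m) + m)" for n using e[of n] 3 bg
      by (metis add.commute add.left_commute bij_is_inj inv_f_f le_add_diff_inverse2 less_imp_le)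
    then have "att adj (inv g) (\<lambda>n. r (n + m)) (k - m)" using rk 3 by (simp add: att_def)
    then have "same_end (inv g \<circ> s) s" using hyp_case[OF fG nf A B Ginv[OF gG] _ same_end_tail] by blast
    then show ?thesis by (rule fix_inv[OF bg])
  qed
qed

lemma cls:
  assumes uG: "u \<in> G" and nfu: "\<And>p v. 0 < p \<Longrightarrow> (u ^^ p) v \<noteq> v"
    and Ap: "att adj u rp D" and Am: "att adj (inv u) rm D'"
    and e: "ray adj \<eta>" and fx: "same_end (u \<circ> \<eta>) \<eta>"
  shows "same_end \<eta> rp \<or> same_end \<eta> rm"
proof -
  have "\<And>v. u v \<noteq> v" using nfu[of 1] by simp
  then obtain k d where kd: "att adj u (\<lambda>n. \<eta> (n + k)) d \<or> att adj (inv u) (\<lambda>n. \<eta> (n + k)) d"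
    using fixed_end_att[OF Gisom[OF uG] _ e fx] by blast
  have t: "same_end \<eta> (\<lambda>n. \<eta> (n + k))" by (rule same_end_sym[OF same_end_tail])
  show ?thesis
  proof (cases "att adj u (\<lambda>n. \<eta> (n + k)) d")
    case True
    then have "same_end (\<lambda>n. \<eta> (n + k)) rp" using KL[OF Gisom[OF uG] True Ap] by blast
    then show ?thesis using t same_end_trans by blast
  next
    case False
    then have A2: "att adj (inv u) (\<lambda>n. \<eta> (n + k)) d" using kd by blast
    then have "same_end (\<lambda>n. \<eta> (n + k)) rm" using KL[OF isom_inv[OF Gisom[OF uG]] A2 Am] by blast
    then show ?thesis using t same_end_trans by blast
  qed
qed

lemma se_comp2: "same_end (d \<circ> a) b \<Longrightarrow> same_end (c \<circ> b) t \<Longrightarrow> same_end ((c \<circ> d) \<circ> a) t"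
  using same_end_comp[of "d \<circ> a" b c] same_end_trans by (simp add: o_assoc)

lemma transfer: "same_end a a' \<Longrightarrow> same_end b b' \<Longrightarrow> same_end (c \<circ> a) b \<Longrightarrow> same_end (c \<circ> a') b'"
  by (meson same_end_comp same_end_sym same_end_trans)

end

theorem lemma3p3:
  fixes adj :: "'v \<Rightarrow> 'v \<Rightarrow> bool"
    and g :: "nat \<Rightarrow> ('v \<Rightarrow> 'v)"
    and r :: nat
    and G :: "('v \<Rightarrow> 'v) set"
    and h :: "'v \<Rightarrow> 'v"
  assumes "simplicial_tree adj"
    and "locally_finite adj"
    and "\<forall>i\<in>{1..r}. isom adj (g i)"
    and "G = gen_group (g ` {1..r})"
    and "discrete_subgroup G"
    and "\<not> elementary adj G"
    and "h \<in> G"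
    and "\<forall>n::nat. n > 0 \<longrightarrow> (h ^^ n) \<noteq> id"
  shows "\<exists>i\<in>{1..r}. \<not> elementary adj (gen_group {g i, h})"
proof (rule ccontr)
  assume "\<not> (\<exists>i\<in>{1..r}. \<not> elementary adj (gen_group {g i, h}))"
  then have Ei: "\<And>i. i \<in> {1..r} \<Longrightarrow> elementary adj (gen_group {g i, h})" by blast
  note st = assms(1) and lf = assms(2) and gi = assms(3) and GG = assms(4) and disc = assms(5)
    and ne = assms(6) and hG = assms(7) and io = assms(8)
  interpret tree adj using st unfolding simplicial_tree_def by unfold_locales blast+
  have Gid: "id \<in> G" unfolding GG by (rule gg_id)
  have Gc: "\<And>f g. f \<in> G \<Longrightarrow> g \<in> G \<Longrightarrow> f \<circ> g \<in> G" unfolding GG by (rule gg_comp)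
  have Gi: "\<And>f. f \<in> G \<Longrightarrow> inv f \<in> G" unfolding GG by (rule gg_inv)
  have Gsub: "G \<subseteq> {f. isom adj f}" unfolding GG
    by (rule gg_sub) (use gi isom_id isom_comp isom_inv in auto)
  then have Gs: "\<And>f. f \<in> G \<Longrightarrow> isom adj f" by blast
  obtain F where F: "finite F" "\<forall>c\<in>G. (\<forall>x\<in>F. c x = x) \<longrightarrow> c = id"
    using disc_F[OF disc Gid] by blast
  have FS: "finite {c \<in> G. c v = v}" for v
    by (rule FS_lemma[OF _ F Gc Gi Gs]) (use lf in \<open>simp add: locally_finite_def\<close>)
  interpret grp adj G by unfold_locales (use Gid Gc Gi Gs FS in auto)
  have r1: "1 \<le> r"
  proof (rule ccontr)
    assume "\<not> 1 \<le> r"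
    then have "g ` {1..r} = {}" by simp
    then have "G \<subseteq> {id}" unfolding GG by (intro gg_sub) auto
    then have "\<forall>c\<in>G. c undefined = undefined" by auto
    then have "elementary adj G" unfolding elementary_def by blast
    then show False using ne by blast
  qed
  define u where "u = h \<circ> h"
  have uG: "u \<in> G" unfolding u_def using Gc hG by blast
  have u2: "u = h ^^ 2" unfolding u_def by (simp add: numeral_2_eq_2)
  have nfu: "(u ^^ p) v \<noteq> v" if "0 < p" for p v
    unfolding u2 funpow_mult using no_fix[OF hG io] that by simp
  have bu: "bij u" using Gbij uG by blast
  have nfi: "(inv u ^^ p) v \<noteq> v" if "0 < p" for p v
  proof
    assume "(inv u ^^ p) v = v"
    then have "inv (u ^^ p) v = v" using inv_fn[OF bu] by simp
    then have "(u ^^ p) v = v" using Gbij[OF Gpow[OF uG]] by (metis bij_inv_eq_iff)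
    then show False using nfu that by blast
  qed
  have iiu: "inv (inv u) = u" using bu by (simp add: inv_inv_eq)
  have hfix_u: "same_end (u \<circ> \<eta>) \<eta>" if "same_end (h \<circ> \<eta>) \<eta>" for \<eta>
    unfolding u_def using se_comp2[OF that that] .
  have hswap_u: "same_end (u \<circ> \<eta>) \<eta>" if "same_end (h \<circ> \<eta>) \<sigma>" "same_end (h \<circ> \<sigma>) \<eta>" for \<eta> \<sigma>
    unfolding u_def using se_comp2[OF that(1) that(2)] .
  have h1: "h v \<noteq> v" for v using no_fix[OF hG io, of 1] by simp
  obtain \<rho>0 where r0: "ray adj \<rho>0" "same_end (u \<circ> \<rho>0) \<rho>0"
  proof -
    have "1 \<in> {1..r}" using r1 by simp
    then have El: "elementary adj (gen_group {g 1, h})" by (rule Ei)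
    have hin: "h \<in> gen_group {g 1, h}" using gg_gen by blast
    show ?thesis using El unfolding elementary_def
    proof (elim disjE exE conjE)
      fix v assume "\<forall>c\<in>gen_group {g 1, h}. c v = v"
      then show ?thesis using hin h1 by blast
    next
      fix \<eta> assume "ray adj \<eta>" "\<forall>c\<in>gen_group {g 1, h}. same_end (c \<circ> \<eta>) \<eta>"
      then show ?thesis using that hin hfix_u by blast
    next
      fix \<eta> \<sigma> assume "ray adj \<eta>" "\<forall>c\<in>gen_group {g 1, h}. same_end (c \<circ> \<eta>) \<eta> \<and> same_end (c \<circ> \<sigma>) \<sigma>
          \<or> same_end (c \<circ> \<eta>) \<sigma> \<and> same_end (c \<circ> \<sigma>) \<eta>"
      then show ?thesis using that hin hfix_u hswap_u by blast
    qed
  qed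
  obtain \<rho>p Dp where Ap: "att adj u \<rho>p Dp"
  proof -
    have "\<And>v. u v \<noteq> v" using nfu[of 1] by simp
    then obtain k d where kd: "att adj u (\<lambda>n. \<rho>0 (n + k)) d \<or> att adj (inv u) (\<lambda>n. \<rho>0 (n + k)) d"
      using fixed_end_att[OF Gisom[OF uG] _ r0] by blast
    show ?thesis
    proof (cases "att adj u (\<lambda>n. \<rho>0 (n + k)) d")
      case True then show ?thesis using that by blast
    next
      case False
      then have "att adj (inv u) (\<lambda>n. \<rho>0 (n + k)) d" using kd by blast
      then obtain s where "att adj (inv (inv u)) s d" using rep[OF isom_inv[OF Gisom[OF uG]]] by blast
      then show ?thesis using that iiu by auto
    qed
  qed
  obtain \<rho>m where Am: "att adj (inv u) \<rho>m Dp" and pm: "\<not> same_end \<rho>p \<rho>m"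
    using rep[OF Gisom[OF uG] Ap] by blast
  have Am': "att adj (inv (inv u)) \<rho>p Dp" using Ap iiu by simp
  have iuG: "inv u \<in> G" using Gi uG by blast
  define pres where "pres c \<longleftrightarrow> (same_end (c \<circ> \<rho>p) \<rho>p \<and> same_end (c \<circ> \<rho>m) \<rho>m)
     \<or> (same_end (c \<circ> \<rho>p) \<rho>m \<and> same_end (c \<circ> \<rho>m) \<rho>p)" for c
  have fixboth: "same_end (c \<circ> \<rho>p) \<rho>p \<and> same_end (c \<circ> \<rho>m) \<rho>m"
    if "c \<in> G" "same_end (c \<circ> \<rho>p) \<rho>p \<or> same_end (c \<circ> \<rho>m) \<rho>m" for c
    using that other_end[OF uG nfu Ap Am that(1)] other_end[OF iuG nfi Am Am' that(1)] by blast
  have ucls: "same_end \<eta> \<rho>p \<or> same_end \<eta> \<rho>m" if "ray adj \<eta>" "same_end (u \<circ> \<eta>) \<eta>" for \<eta>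
    by (rule cls[OF uG nfu Ap Am that])
  have gpres: "pres (g i)" if i: "i \<in> {1..r}" for i
  proof -
    have El: "elementary adj (gen_group {g i, h})" by (rule Ei[OF i])
    have hin: "h \<in> gen_group {g i, h}" and gin: "g i \<in> gen_group {g i, h}" using gg_gen by blast+
    have giG: "g i \<in> G" unfolding GG using gg_gen i by blast
    show ?thesis using El unfolding elementary_def
    proof (elim disjE exE conjE)
      fix v assume "\<forall>c\<in>gen_group {g i, h}. c v = v"
      then show ?thesis using hin h1 by blast
    next
      fix \<eta> assume e: "ray adj \<eta>" "\<forall>c\<in>gen_group {g i, h}. same_end (c \<circ> \<eta>) \<eta>"
      then have ue: "same_end (u \<circ> \<eta>) \<eta>" using hin hfix_u by blast
      have ge: "same_end (g i \<circ> \<eta>) \<eta>" using e gin by blast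
      have "same_end (g i \<circ> \<rho>p) \<rho>p \<or> same_end (g i \<circ> \<rho>m) \<rho>m"
        using ucls[OF e(1) ue] transfer[OF _ _ ge] by blast
      then show ?thesis using fixboth[OF giG] unfolding pres_def by blast
    next
      fix \<eta> \<sigma> assume e: "ray adj \<eta>" "ray adj \<sigma>" "\<not> same_end \<eta> \<sigma>"
        "\<forall>c\<in>gen_group {g i, h}. same_end (c \<circ> \<eta>) \<eta> \<and> same_end (c \<circ> \<sigma>) \<sigma>
          \<or> same_end (c \<circ> \<eta>) \<sigma> \<and> same_end (c \<circ> \<sigma>) \<eta>"
      have ue: "same_end (u \<circ> \<eta>) \<eta>" using e(4) hin hfix_u hswap_u by blast
      have us: "same_end (u \<circ> \<sigma>) \<sigma>" using e(4) hin hfix_u hswap_u by blast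
      have c1: "same_end \<eta> \<rho>p \<or> same_end \<eta> \<rho>m" by (rule ucls[OF e(1) ue])
      have c2: "same_end \<sigma> \<rho>p \<or> same_end \<sigma> \<rho>m" by (rule ucls[OF e(2) us])
      have "(same_end \<eta> \<rho>p \<and> same_end \<sigma> \<rho>m) \<or> (same_end \<eta> \<rho>m \<and> same_end \<sigma> \<rho>p)"
        using c1 c2 e(3) same_end_sym same_end_trans by blast
      moreover have "same_end (g i \<circ> \<eta>) \<eta> \<and> same_end (g i \<circ> \<sigma>) \<sigma>
          \<or> same_end (g i \<circ> \<eta>) \<sigma> \<and> same_end (g i \<circ> \<sigma>) \<eta>" using e(4) gin by blast
      ultimately show ?thesis unfolding pres_def using transfer by blast
    qed
  qed
  have "G \<subseteq> {c. bij c \<and> pres c}" unfolding GG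
  proof (rule gg_sub)
    show "g ` {1..r} \<subseteq> {c. bij c \<and> pres c}" using gpres gi isom_bij by blast
    show "id \<in> {c. bij c \<and> pres c}" unfolding pres_def by (simp add: same_end_refl)
    show "\<forall>f\<in>{c. bij c \<and> pres c}. \<forall>g\<in>{c. bij c \<and> pres c}. f \<circ> g \<in> {c. bij c \<and> pres c}"
      unfolding pres_def using se_comp2 bij_comp by blast
    show "\<forall>f\<in>{c. bij c \<and> pres c}. inv f \<in> {c. bij c \<and> pres c}"
      unfolding pres_def using se_inv bij_imp_bij_inv by blast
  qed
  then have "elementary adj G" unfolding elementary_def pres_def
    using att_ray[OF Ap] att_ray[OF Am] pm by blast
  then show False using ne by blast
qed

end
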